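(* Let $A$ be an algebra over a field $K$ and let $T:A\to A$ be a weak multiplier of $A$ such that $\langle T(A)\rangle\cap A_0=\{0\}$. Then $T$ is $K$-linear.
   Context: An algebra over $K$ is a $K$-vector space with a bilinear, not necessarily associative multiplication. A map $T:A\to A$ (not assumed linear) is a weak multiplier if $xT(y)=T(x)y$ for all $x,y\in A$. $\mathrm{Ann}_l(A)=\{a\in A: ax=0\ \forall x\in A\}$, $\mathrm{Ann}_r(A)=\{a\in A: xa=0\ \forall x\in A\}$, and $A_0=\mathrm{Ann}_l(A)\cap\mathrm{Ann}_r(A)$. For a subset $X\subseteq A$, $\langle X\rangle$ is the linear subspace spanned by $X$. *)

theory Defs
  imports Main "HOL.Vector_Spaces"
begin

definition algebra_over :: "('k::field \<Rightarrow> 'v::ab_group_add \<Rightarrow> 'v) \<Rightarrow> ('v \<Rightarrow> 'v \<Rightarrow> 'v) \<Rightarrow> bool" where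
  "algebra_over scale mult \<longleftrightarrow>
     vector_space scale \<and>
     (\<forall>x. Vector_Spaces.linear scale scale (mult x)) \<and>
     (\<forall>y. Vector_Spaces.linear scale scale (\<lambda>x. mult x y))"

definition weak_multiplier :: "('v \<Rightarrow> 'v \<Rightarrow> 'v) \<Rightarrow> ('v \<Rightarrow> 'v) \<Rightarrow> bool" where
  "weak_multiplier mult T \<longleftrightarrow> (\<forall>x y. mult x (T y) = mult (T x) y)"

definition Ann_l :: "('v \<Rightarrow> 'v \<Rightarrow> 'v::zero) \<Rightarrow> 'v set" where
  "Ann_l mult = {a. \<forall>x. mult a x = 0}"

definition Ann_r :: "('v \<Rightarrow> 'v \<Rightarrow> 'v::zero) \<Rightarrow> 'v set" where
  "Ann_r mult = {a. \<forall>x. mult x a = 0}"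

definition A0 :: "('v \<Rightarrow> 'v \<Rightarrow> 'v::zero) \<Rightarrow> 'v set" where
  "A0 mult = Ann_l mult \<inter> Ann_r mult"

end

theory Submission
  imports Defs
begin

theorem proposition2p3:
  fixes scale :: "'k::field \<Rightarrow> 'v::ab_group_add \<Rightarrow> 'v"
    and mult :: "'v \<Rightarrow> 'v \<Rightarrow> 'v"
    and T :: "'v \<Rightarrow> 'v"
  assumes "algebra_over scale mult"
    and "weak_multiplier mult T"
    and "module.span scale (range T) \<inter> A0 mult = {0}"
  shows "Vector_Spaces.linear scale scale T"
proof -
  have vs: "vector_space scale" using assms(1) unfolding algebra_over_def by blast
  then interpret vector_space scale .
  have lin1: "\<And>x. Vector_Spaces.linear scale scale (mult x)"
    and lin2: "\<And>y. Vector_Spaces.linear scale scale (\<lambda>x. mult x y)"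
    using assms(1) unfolding algebra_over_def by blast+
  have rA: "\<And>x a b. mult x (a + b) = mult x a + mult x b"
   and rS: "\<And>x c a. mult x (scale c a) = scale c (mult x a)"
    using lin1 unfolding linear_iff by blast+
  have lA: "\<And>y a b. mult (a + b) y = mult a y + mult b y"
   and lS: "\<And>y c a. mult (scale c a) y = scale c (mult a y)"
    using lin2 unfolding linear_iff by blast+
  have rD: "\<And>x a b. mult x (a - b) = mult x a - mult x b"
    by (metis rA add_diff_cancel diff_add_cancel)
  have lD: "\<And>y a b. mult (a - b) y = mult a y - mult b y"
    by (metis lA add_diff_cancel diff_add_cancel)
  have wm: "\<And>x y. mult x (T y) = mult (T x) y"
    using assms(2) unfolding weak_multiplier_def by blast
  have key: "d = 0" if "d \<in> span (range T)" "\<And>z. mult z d = 0" "\<And>z. mult d z = 0" for d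
  proof -
    have "d \<in> A0 mult" using that unfolding A0_def Ann_l_def Ann_r_def by blast
    thus ?thesis using that(1) assms(3) by blast
  qed
  have add: "T (a + b) = T a + T b" for a b
  proof -
    let ?d = "T (a + b) - T a - T b"
    have s: "?d \<in> span (range T)"
      by (intro span_diff span_base) auto
    have "mult z ?d = 0" for z
      by (simp add: rD wm rA)
    moreover have "mult ?d z = 0" for z
      by (simp add: lD wm[symmetric] lA)
    ultimately have "?d = 0" using key s by blast
    thus ?thesis by (simp add: algebra_simps)
  qed
  have sc: "T (scale c a) = scale c (T a)" for c a
  proof -
    let ?d = "T (scale c a) - scale c (T a)"
    have s: "?d \<in> span (range T)"
      by (intro span_diff span_scale span_base) auto
    have "mult z ?d = 0" for z
      by (simp add: rD wm lS rS)
    moreover have "mult ?d z = 0" for z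
      by (simp add: lD wm[symmetric] rS lS)
    ultimately have "?d = 0" using key s by blast
    thus ?thesis by simp
  qed
  show ?thesis unfolding linear_iff using vs add sc by blast
qed

end
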